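(* Let $\mathbf A=(\mathbf a_1,\ldots,\mathbf a_m)^\top\in\mathbb R^{m\times d}$ and $\mathbf b=(b_1,\ldots,b_m)^\top\in\mathbb R^m$. Then the following are equivalent: (A) $(\mathbf A,\mathbf b)$ is affine phase retrievable for $\mathbb R^d$. (B) The map $\mathbf M^2_{\mathbf A,\mathbf b}$ is injective on $\mathbb R^d$. (C) For any $\mathbf u,\mathbf v\in\mathbb R^d$ with $\mathbf u\neq 0$, there exists $k$ with $1\le k\le m$ such that $\langle \mathbf a_k,\mathbf u\rangle(\langle \mathbf a_k,\mathbf v\rangle+b_k)\neq 0$. (D) For any $S\subset\{1,\ldots,m\}$, if $\mathbf b_S\in\mathrm{span}(\mathbf A_S)$ then $\mathrm{span}(\mathbf A_{S^c}^\top)=\mathrm{span}\{\mathbf a_j: j\in S^c\}=\mathbb R^d$. (E) The Jacobian $J(\mathbf x)$ of the map $\mathbf M^2_{\mathbf A,\mathbf b}$ has rank $d$ for all $\mathbf x\in\mathbb R^d$.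
   Context: For $\mathbf A=(\mathbf a_1,\ldots,\mathbf a_m)^\top$ and $\mathbf b$, define $\mathbf M_{\mathbf A,\mathbf b}(\mathbf x)=(|\langle\mathbf a_1,\mathbf x\rangle+b_1|,\ldots,|\langle\mathbf a_m,\mathbf x\rangle+b_m|)$ and $\mathbf M^2_{\mathbf A,\mathbf b}(\mathbf x)=(|\langle\mathbf a_1,\mathbf x\rangle+b_1|^2,\ldots,|\langle\mathbf a_m,\mathbf x\rangle+b_m|^2)$, where $\langle\cdot,\cdot\rangle$ is the standard inner product. $(\mathbf A,\mathbf b)$ is called affine phase retrievable for $\mathbb R^d$ if $\mathbf M_{\mathbf A,\mathbf b}$ is injective on $\mathbb R^d$. For $T\subset\{1,\ldots,m\}$, $\mathbf A_T=(\mathbf a_j:j\in T)^\top$ is the submatrix of rows indexed by $T$, $\mathbf b_T$ the subvector of entries indexed by $T$, $S^c$ the complement of $S$ in $\{1,\ldots,m\}$, and for a matrix $\mathbf B$, $\mathrm{span}(\mathbf B)$ is the span of its columns (so $\mathrm{span}(\mathbf A_T)\subset\mathbb R^{\#T}$). *)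

theory Defs
  imports "HOL-Analysis.Analysis"
begin

text \<open>Rows of A :: real^'d^'m are a_k = A $ k; m = CARD('m), d = CARD('d).\<close>

definition M_map :: "real^'d^'m \<Rightarrow> real^'m \<Rightarrow> real^'d \<Rightarrow> real^'m" where
  "M_map A b x = (\<chi> k. \<bar>inner (A $ k) x + b $ k\<bar>)"

definition M2_map :: "real^'d^'m \<Rightarrow> real^'m \<Rightarrow> real^'d \<Rightarrow> real^'m" where
  "M2_map A b x = (\<chi> k. \<bar>inner (A $ k) x + b $ k\<bar> ^ 2)"

definition affine_phase_retrievable :: "real^'d^'m \<Rightarrow> real^'m \<Rightarrow> bool" where
  "affine_phase_retrievable A b \<longleftrightarrow> inj (M_map A b)"

definition b_in_span_AS :: "real^'d^'m \<Rightarrow> real^'m \<Rightarrow> 'm set \<Rightarrow> bool" where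
  "b_in_span_AS A b S \<longleftrightarrow> (\<exists>x::real^'d. \<forall>j\<in>S. b $ j = inner (A $ j) x)"

end

theory Submission
  imports Defs
begin

lemma M2_deriv:
  fixes A :: "real^'d^'m" and b :: "real^'m"
  shows "(M2_map A b has_derivative
     (\<lambda>h. \<chi> k. 2 * (inner (A $ k) x + b $ k) * inner (A $ k) h)) (at x)"
proof -
  have "(M2_map A b has_derivative
     (\<lambda>h. \<chi> k. 2 * (inner (A $ k) x + b $ k) * inner (A $ k) h)) (at x within UNIV)"
  proof (subst has_derivative_componentwise_within, intro ballI)
    fix i :: "real^'m" assume "i \<in> Basis"
    then obtain k where i: "i = axis k 1" by (auto simp: Basis_vec_def)
    have "((\<lambda>y. (inner (A $ k) y + b $ k)^2) has_derivative
         (\<lambda>h. 2 * (inner (A $ k) x + b $ k) * inner (A $ k) h)) (at x)"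
      by (auto intro!: derivative_eq_intros simp: algebra_simps)
    then show "((\<lambda>y. M2_map A b y \<bullet> i) has_derivative
       (\<lambda>h. (\<chi> k. 2 * (inner (A $ k) x + b $ k) * inner (A $ k) h) \<bullet> i)) (at x within UNIV)"
      by (simp add: i inner_axis M2_map_def)
  qed
  then show ?thesis by simp
qed

lemma jac:
  fixes A :: "real^'d^'m" and b :: "real^'m"
  shows "jacobian (M2_map A b) (at x) *v h = (\<chi> k. 2 * (inner (A $ k) x + b $ k) * inner (A $ k) h)"
proof -
  have "M2_map A b differentiable (at x)" using M2_deriv by (rule differentiableI)
  then have "(M2_map A b has_derivative (\<lambda>h. jacobian (M2_map A b) (at x) *v h)) (at x)"
    by (simp add: jacobian_works)
  from has_derivative_unique[OF this M2_deriv] show ?thesis by meson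
qed

lemma AB:
  fixes A :: "real^'d^'m" and b :: "real^'m"
  shows "affine_phase_retrievable A b \<longleftrightarrow> inj (M2_map A b)"
proof -
  have "M2_map A b x = M2_map A b y \<longleftrightarrow> M_map A b x = M_map A b y" for x y
  proof -
    have "M2_map A b x = M2_map A b y \<longleftrightarrow>
      (\<forall>k. \<bar>inner (A $ k) x + b $ k\<bar> ^ 2 = \<bar>inner (A $ k) y + b $ k\<bar> ^ 2)"
      by (simp add: M2_map_def vec_eq_iff)
    also have "\<dots> \<longleftrightarrow> (\<forall>k. \<bar>inner (A $ k) x + b $ k\<bar> = \<bar>inner (A $ k) y + b $ k\<bar>)"
      by (simp only: power2_eq_iff_nonneg[OF abs_ge_zero abs_ge_zero])
    also have "\<dots> \<longleftrightarrow> M_map A b x = M_map A b y"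
      by (simp add: M_map_def vec_eq_iff)
    finally show ?thesis .
  qed
  then show ?thesis unfolding affine_phase_retrievable_def inj_def by auto
qed

lemma AC:
  fixes A :: "real^'d^'m" and b :: "real^'m"
  shows "affine_phase_retrievable A b \<longleftrightarrow>
            (\<forall>u v :: real^'d. u \<noteq> 0 \<longrightarrow>
               (\<exists>k. inner (A $ k) u * (inner (A $ k) v + b $ k) \<noteq> 0))"
proof
  assume inj: "affine_phase_retrievable A b"
  show "\<forall>u v :: real^'d. u \<noteq> 0 \<longrightarrow>
               (\<exists>k. inner (A $ k) u * (inner (A $ k) v + b $ k) \<noteq> 0)"
  proof (intro allI impI, rule ccontr)
    fix u v :: "real^'d" assume u: "u \<noteq> 0"
      and h: "\<not> (\<exists>k. inner (A $ k) u * (inner (A $ k) v + b $ k) \<noteq> 0)"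
    have "M_map A b (v + u) = M_map A b (v - u)"
    proof (unfold M_map_def vec_eq_iff, intro allI)
      fix k
      have "inner (A $ k) u = 0 \<or> inner (A $ k) v + b $ k = 0" using h by auto
      then show "(\<chi> k. \<bar>inner (A $ k) (v + u) + b $ k\<bar>) $ k = (\<chi> k. \<bar>inner (A $ k) (v - u) + b $ k\<bar>) $ k"
        by (auto simp: inner_add_right inner_diff_right)
    qed
    with inj have "v + u = v - u" unfolding affine_phase_retrievable_def inj_def by blast
    then have "u + u = 0" by (simp add: algebra_simps)
    then have "u = 0" by (metis scaleR_2 scaleR_eq_0_iff zero_neq_numeral)
    with u show False by simp
  qed
next
  assume C: "\<forall>u v :: real^'d. u \<noteq> 0 \<longrightarrow>
               (\<exists>k. inner (A $ k) u * (inner (A $ k) v + b $ k) \<noteq> 0)"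
  show "affine_phase_retrievable A b"
    unfolding affine_phase_retrievable_def inj_def
  proof (intro allI impI, rule ccontr)
    fix x y :: "real^'d" assume eq: "M_map A b x = M_map A b y" and ne: "x \<noteq> y"
    define u where "u = (1/2) *\<^sub>R (x - y)"
    define v where "v = (1/2) *\<^sub>R (x + y)"
    have "u \<noteq> 0" using ne by (simp add: u_def)
    with C obtain k where k: "inner (A $ k) u * (inner (A $ k) v + b $ k) \<noteq> 0" by blast
    have "\<bar>inner (A $ k) x + b $ k\<bar> = \<bar>inner (A $ k) y + b $ k\<bar>"
      using eq by (simp add: M_map_def vec_eq_iff)
    then have "inner (A $ k) x + b $ k = inner (A $ k) y + b $ k \<or>
               inner (A $ k) x + b $ k = - (inner (A $ k) y + b $ k)"
      by (simp add: abs_eq_iff)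
    moreover have "inner (A $ k) u = (inner (A $ k) x - inner (A $ k) y) / 2"
      by (simp add: u_def inner_diff_right)
    moreover have "inner (A $ k) v + b $ k = (inner (A $ k) x + b $ k + (inner (A $ k) y + b $ k)) / 2"
      by (simp add: v_def inner_add_right)
    ultimately show False using k by auto
  qed
qed

lemma span_not_univ:
  fixes T :: "(real^'d) set"
  assumes "span T \<noteq> UNIV"
  obtains u where "u \<noteq> 0" "\<And>t. t \<in> T \<Longrightarrow> inner u t = 0"
proof -
  have "dim T < DIM(real^'d)"
    using assms dim_eq_full dim_subset_UNIV le_neq_implies_less by metis
  from orthogonal_to_subspace_exists[OF this] obtain u where
    "u \<noteq> 0" "\<And>y. y \<in> span T \<Longrightarrow> orthogonal u y" by blast
  then show ?thesis using that by (auto simp: orthogonal_def span_base)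
qed

lemma CD:
  fixes A :: "real^'d^'m" and b :: "real^'m"
  shows "(\<forall>u v :: real^'d. u \<noteq> 0 \<longrightarrow>
               (\<exists>k. inner (A $ k) u * (inner (A $ k) v + b $ k) \<noteq> 0))
     \<longleftrightarrow> (\<forall>S :: 'm set. b_in_span_AS A b S \<longrightarrow> span {A $ j | j. j \<in> - S} = UNIV)"
proof
  assume C: "\<forall>u v :: real^'d. u \<noteq> 0 \<longrightarrow>
               (\<exists>k. inner (A $ k) u * (inner (A $ k) v + b $ k) \<noteq> 0)"
  show "\<forall>S :: 'm set. b_in_span_AS A b S \<longrightarrow> span {A $ j | j. j \<in> - S} = UNIV"
  proof (intro allI impI, rule ccontr)
    fix S :: "'m set" assume bs: "b_in_span_AS A b S"
      and ns: "span {A $ j | j. j \<in> - S} \<noteq> UNIV"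
    from bs obtain x where x: "\<forall>j\<in>S. b $ j = inner (A $ j) x"
      unfolding b_in_span_AS_def by blast
    from span_not_univ[OF ns] obtain u where u: "u \<noteq> 0"
      "\<And>t. t \<in> {A $ j | j. j \<in> - S} \<Longrightarrow> inner u t = 0" by blast
    from C u(1) obtain k where k: "inner (A $ k) u * (inner (A $ k) (-x) + b $ k) \<noteq> 0" by blast
    show False
    proof (cases "k \<in> S")
      case True then show ?thesis using k x by (simp add: inner_minus_right)
    next
      case False then have "inner u (A $ k) = 0" using u(2) by blast
      then show ?thesis using k by (simp add: inner_commute)
    qed
  qed
next
  assume D: "\<forall>S :: 'm set. b_in_span_AS A b S \<longrightarrow> span {A $ j | j. j \<in> - S} = UNIV"
  show "\<forall>u v :: real^'d. u \<noteq> 0 \<longrightarrow>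
               (\<exists>k. inner (A $ k) u * (inner (A $ k) v + b $ k) \<noteq> 0)"
  proof (intro allI impI, rule ccontr)
    fix u v :: "real^'d" assume u: "u \<noteq> 0"
      and h: "\<not> (\<exists>k. inner (A $ k) u * (inner (A $ k) v + b $ k) \<noteq> 0)"
    define S where "S = {k. inner (A $ k) v + b $ k = 0}"
    have "b_in_span_AS A b S" unfolding b_in_span_AS_def
      by (rule exI[of _ "-v"]) (auto simp: S_def inner_minus_right)
    with D have sp: "span {A $ j | j. j \<in> - S} = UNIV" by blast
    have "{A $ j | j. j \<in> - S} \<subseteq> {y. inner u y = 0}"
      using h by (auto simp: S_def inner_commute)
    then have "span {A $ j | j. j \<in> - S} \<subseteq> {y. inner u y = 0}"
      by (intro span_minimal) (auto simp: subspace_def inner_add_right)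
    then have "inner u u = 0" using sp by blast
    with u show False by simp
  qed
qed

lemma CE:
  fixes A :: "real^'d^'m" and b :: "real^'m"
  shows "(\<forall>u v :: real^'d. u \<noteq> 0 \<longrightarrow>
               (\<exists>k. inner (A $ k) u * (inner (A $ k) v + b $ k) \<noteq> 0))
     \<longleftrightarrow> (\<forall>x :: real^'d. rank (jacobian (M2_map A b) (at x)) = CARD('d))"
proof -
  have "rank (jacobian (M2_map A b) (at x)) = CARD('d) \<longleftrightarrow>
     (\<forall>u. u \<noteq> 0 \<longrightarrow> (\<exists>k. inner (A $ k) u * (inner (A $ k) x + b $ k) \<noteq> 0))" for x
  proof -
    have 1: "rank (jacobian (M2_map A b) (at x)) = CARD('d) \<longleftrightarrow>
       \<not>(\<exists>u. u \<noteq> 0 \<and> jacobian (M2_map A b) (at x) *v u = 0)"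
      using matrix_nonfull_linear_equations_eq by blast
    have 2: "jacobian (M2_map A b) (at x) *v u = 0 \<longleftrightarrow>
       (\<forall>k. inner (A $ k) u * (inner (A $ k) x + b $ k) = 0)" for u
    proof -
      have e: "(2 * p * q = 0) = (q * p = 0)" for p q :: real by auto
      show ?thesis by (simp only: jac vec_eq_iff vec_lambda_beta zero_index e)
    qed
    show ?thesis by (simp only: 1 2) blast
  qed
  then show ?thesis by blast
qed

theorem theorem2p1:
  fixes A :: "real^'d^'m" and b :: "real^'m"
  shows "(affine_phase_retrievable A b \<longleftrightarrow> inj (M2_map A b))
       \<and> (affine_phase_retrievable A b \<longleftrightarrow>
            (\<forall>u v :: real^'d. u \<noteq> 0 \<longrightarrow>
               (\<exists>k. inner (A $ k) u * (inner (A $ k) v + b $ k) \<noteq> 0)))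
       \<and> (affine_phase_retrievable A b \<longleftrightarrow>
            (\<forall>S :: 'm set. b_in_span_AS A b S \<longrightarrow> span {A $ j | j. j \<in> - S} = UNIV))
       \<and> (affine_phase_retrievable A b \<longleftrightarrow>
            (\<forall>x :: real^'d. rank (jacobian (M2_map A b) (at x)) = CARD('d)))"
  using AB[of A b] AC[of A b] CD[of A b] CE[of A b] by simp

end
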